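(* Let $\mathcal F=(A_1,\dots,A_m)$ and $\mathcal F'=(A'_1,\dots,A'_m)$ be objects of $\mathcal{S}h_n(\Lambda_m,\mathbbm{k})$ described as below. Then $$\mathrm{Ext}^0(\mathcal F,\mathcal F')\cong\{(u_1,u_2)\in(\mathrm{End}\,V)^2: A'_ku_1=u_2A_k\text{ for all even }k,\ A'_ku_2=u_1A_k\text{ for all odd }k\},$$ where $(u_1,u_2)$ corresponds to the morphism given on the diagram data by $u_0=u_1$ on the top $V$, $u_k=u_1$ on the $k$-th lower arc for $k$ odd, $u_k=u_2$ for $k$ even, and $v=\begin{pmatrix}u_2&0\\0&u_1\end{pmatrix}$ on $V^2$.
   Context: $\mathbbm{k}$ a field, $\dim V=n$; $P_0=1$, $P_1(a_1)=a_1$, $P_m=P_{m-1}(a_1,\dots,a_{m-1})a_m+P_{m-2}(a_1,\dots,a_{m-2})$. $\Lambda_m$ is the rainbow closure of $\sigma_1^m\in B_2$ with binary Maslov potential; $\mathcal{S}h_n(\Lambda_m,\mathbbm{k})$ is the category of constructible (w.r.t. the front) complexes of sheaves of $\mathbbm{k}$-modules on $\mathbb R^2$ with microsupport in $\Lambda_m$, acyclic for $z\ll 0$, of microlocal rank $n$, modulo acyclics. A tuple $(A_1,\dots,A_m)\in(\mathrm{End}\,V)^m$ with $P_m(A_1,\dots,A_m)$ invertible denotes the sheaf with diagram data: top space $V$ (inside outer cusps), middle space $V^2$ (inside inner cusps), $\psi=(0\ \ 1):V^2\to V$, and maps $\phi_1,\dots,\phi_{m+1}:V\to V^2$ from the $m+1$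 lower braid arcs (each with stalk $V$) such that $\begin{pmatrix}0&1\\1&A_1\end{pmatrix}\cdots\begin{pmatrix}0&1\\1&A_k\end{pmatrix}=\phi_k\oplus\phi_{k+1}$ for $1\le k\le m$. A morphism of such sheaves is a family of maps $u_0$ (top $V$), $v$ (on $V^2$), $u_1,\dots,u_{m+1}$ (on the arcs) commuting with all $\psi$, $\phi_i$. *)

theory Defs
  imports "HOL-Analysis.Analysis"
begin

text \<open>V is the vector space 'a^'n over the field 'a (n = CARD('n)); End V is 'a^'n^'n,
  composition is matrix product. Linear maps V -> V^2 are pairs (top, bottom) of
  endomorphisms; linear maps V^2 -> V^2 are 2x2 block matrices (a,b,c,d) = [[a,b],[c,d]];
  linear maps V^2 -> V are block rows (x,y).\<close>

type_synonym ('a,'n) endo = "'a^'n^'n"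
type_synonym ('a,'n) blk = "('a,'n) endo \<times> ('a,'n) endo \<times> ('a,'n) endo \<times> ('a,'n) endo"
type_synonym ('a,'n) col = "('a,'n) endo \<times> ('a,'n) endo"
type_synonym ('a,'n) row = "('a,'n) endo \<times> ('a,'n) endo"

definition bmult :: "('a::field,'n::finite) blk \<Rightarrow> ('a,'n) blk \<Rightarrow> ('a,'n) blk" where
  "bmult X Y = (case X of (a,b,c,d) \<Rightarrow> case Y of (e,f,g,h) \<Rightarrow>
     (a**e + b**g, a**f + b**h, c**e + d**g, c**f + d**h))"

definition Mblk :: "('a::field,'n::finite) endo \<Rightarrow> ('a,'n) blk" where
  "Mblk X = (0, mat 1, mat 1, X)"

fun prodM :: "(nat \<Rightarrow> ('a::field,'n::finite) endo) \<Rightarrow> nat \<Rightarrow> ('a,'n) blk" where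
  "prodM A 0 = (mat 1, 0, 0, mat 1)"
| "prodM A (Suc k) = bmult (prodM A k) (Mblk (A (Suc k)))"

fun contP :: "(nat \<Rightarrow> ('a::field,'n::finite) endo) \<Rightarrow> nat \<Rightarrow> ('a,'n) endo" where
  "contP A 0 = mat 1"
| "contP A (Suc 0) = A 1"
| "contP A (Suc (Suc k)) = contP A (Suc k) ** A (Suc (Suc k)) + contP A k"

definition diagram_phis :: "nat \<Rightarrow> (nat \<Rightarrow> ('a::field,'n::finite) endo) \<Rightarrow> (nat \<Rightarrow> ('a,'n) col) \<Rightarrow> bool" where
  "diagram_phis m A phi \<longleftrightarrow> (\<forall>k\<in>{1..m}.
     prodM A k = (fst (phi k), fst (phi (Suc k)), snd (phi k), snd (phi (Suc k))))"

definition psi :: "('a::field,'n::finite) row" where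
  "psi = (0, mat 1)"

definition row_blk :: "('a::field,'n::finite) row \<Rightarrow> ('a,'n) blk \<Rightarrow> ('a,'n) row" where
  "row_blk r v = (case r of (x,y) \<Rightarrow> case v of (a,b,c,d) \<Rightarrow> (x**a + y**c, x**b + y**d))"
definition endo_row :: "('a::field,'n::finite) endo \<Rightarrow> ('a,'n) row \<Rightarrow> ('a,'n) row" where
  "endo_row u r = (case r of (x,y) \<Rightarrow> (u**x, u**y))"
definition blk_col :: "('a::field,'n::finite) blk \<Rightarrow> ('a,'n) col \<Rightarrow> ('a,'n) col" where
  "blk_col v p = (case v of (a,b,c,d) \<Rightarrow> case p of (x,y) \<Rightarrow> (a**x + b**y, c**x + d**y))"
definition col_endo :: "('a::field,'n::finite) col \<Rightarrow> ('a,'n) endo \<Rightarrow> ('a,'n) col" where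
  "col_endo p u = (case p of (x,y) \<Rightarrow> (x**u, y**u))"

text \<open>Morphisms of diagram data (u0, v, u_1..u_{m+1}); u is normalised to 0 outside {1..m+1}.\<close>
definition sheaf_morphisms :: "nat \<Rightarrow> (nat \<Rightarrow> ('a::field,'n::finite) col) \<Rightarrow> (nat \<Rightarrow> ('a,'n) col)
   \<Rightarrow> (('a,'n) endo \<times> ('a,'n) blk \<times> (nat \<Rightarrow> ('a,'n) endo)) set" where
  "sheaf_morphisms m phi phi' = {(u0, v, u).
     endo_row u0 psi = row_blk psi v
     \<and> (\<forall>i\<in>{1..Suc m}. blk_col v (phi i) = col_endo (phi' i) (u i))
     \<and> (\<forall>i. i \<notin> {1..Suc m} \<longrightarrow> u i = 0)}"

definition pair_to_morphism :: "nat \<Rightarrow> ('a::field,'n::finite) endo \<times> ('a,'n) endo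
   \<Rightarrow> ('a,'n) endo \<times> ('a,'n) blk \<times> (nat \<Rightarrow> ('a,'n) endo)" where
  "pair_to_morphism m p = (case p of (u1,u2) \<Rightarrow>
     (u1, (u2, 0, 0, u1), \<lambda>k. if k \<in> {1..Suc m} then (if odd k then u1 else u2) else 0))"

end

theory Submission
  imports Defs
begin

lemma mradd: "((A::'a::field^'n::finite^'n) + B) ** C = A ** C + B ** C"
  by (vector matrix_matrix_mult_def sum.distrib[symmetric] field_simps)

lemma mldiff: "(A::'a::field^'n::finite^'n) ** (B - C) = A ** B - A ** C"
  by (metis add_diff_cancel_right' diff_add_cancel matrix_add_ldistrib)

lemma mrdiff: "((A::'a::field^'n::finite^'n) - B) ** C = A ** C - B ** C"
  by (metis add_diff_cancel_right' diff_add_cancel mradd)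

lemma blk_col_bmult:
  "blk_col (bmult X Y) p = blk_col (X::('a::field,'n::finite) blk) (blk_col Y p)"
  by (cases X; cases Y; cases p)
     (simp add: bmult_def blk_col_def matrix_add_ldistrib mradd matrix_mul_assoc add_ac)

lemma prodM_inj:
  "blk_col (prodM A k) (P, Q) = (0, 0) \<Longrightarrow> P = 0 \<and> Q = (0::'a::field^'n::finite^'n)"
proof (induction k arbitrary: P Q)
  case 0
  then show ?case by (simp add: blk_col_def)
next
  case (Suc k)
  have "blk_col (Mblk (A (Suc k))) (P, Q) = (Q, P + A (Suc k) ** Q)"
    by (simp add: Mblk_def blk_col_def add_ac)
  with Suc.prems have "blk_col (prodM A k) (Q, P + A (Suc k) ** Q) = (0,0)"
    by (simp add: blk_col_bmult)
  from Suc.IH[OF this] have "Q = 0" "P + A (Suc k) ** Q = 0" by auto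
  then show ?case by simp
qed

lemma phis_base:
  assumes "diagram_phis m A phi" "m \<ge> 1"
  shows "phi 1 = (0, mat 1) \<and> phi 2 = (mat 1, A 1)"
proof -
  have "prodM A 1 = (fst (phi 1), fst (phi 2), snd (phi 1), snd (phi 2))"
    using assms unfolding diagram_phis_def by (metis atLeastAtMost_iff le_refl one_add_one plus_1_eq_Suc)
  moreover have "prodM A 1 = (0, mat 1, mat 1, A 1)"
    by (simp add: bmult_def Mblk_def)
  ultimately show ?thesis by (metis prod.inject prod.collapse)
qed

lemma phis_rec:
  assumes "diagram_phis m A phi" "1 \<le> k" "k + 1 \<le> m"
  shows "fst (phi (k+2)) = fst (phi k) + fst (phi (k+1)) ** A (k+1)
       \<and> snd (phi (k+2)) = snd (phi k) + snd (phi (k+1)) ** A (k+1)"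
proof -
  have a: "prodM A k = (fst (phi k), fst (phi (Suc k)), snd (phi k), snd (phi (Suc k)))"
    using assms by (auto simp: diagram_phis_def)
  have b: "prodM A (Suc k) = (fst (phi (Suc k)), fst (phi (Suc (Suc k))), snd (phi (Suc k)), snd (phi (Suc (Suc k))))"
  proof -
    have "Suc k \<in> {1..m}" using assms by simp
    with assms(1) show ?thesis unfolding diagram_phis_def by (rule bspec[where x="Suc k", elim_format]) blast
  qed
  have "prodM A (Suc k) = bmult (prodM A k) (Mblk (A (Suc k)))" by simp
  with a b show ?thesis by (simp add: bmult_def Mblk_def)
qed

lemma phis_inj:
  fixes P Q :: "'a::field^'n::finite^'n"
  assumes "diagram_phis m A phi" "1 \<le> k" "k \<le> m"
    and "fst (phi k) ** P + fst (phi (k+1)) ** Q = 0"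
    and "snd (phi k) ** P + snd (phi (k+1)) ** Q = 0"
  shows "P = 0 \<and> Q = 0"
proof -
  have a: "prodM A k = (fst (phi k), fst (phi (Suc k)), snd (phi k), snd (phi (Suc k)))"
    using assms by (auto simp: diagram_phis_def)
  have "blk_col (prodM A k) (P, Q) = (0,0)"
    using assms(4,5) by (simp add: a blk_col_def)
  then show ?thesis by (rule prodM_inj)
qed

definition cc :: "'a \<Rightarrow> 'a \<Rightarrow> nat \<Rightarrow> 'a" where
  "cc u1 u2 i = (if odd i then u1 else u2)"

definition rels :: "nat \<Rightarrow> (nat \<Rightarrow> 'a::field^'n::finite^'n) \<Rightarrow> (nat \<Rightarrow> 'a^'n^'n) \<Rightarrow> 'a^'n^'n \<Rightarrow> 'a^'n^'n \<Rightarrow> bool" where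
  "rels k A A' u1 u2 \<longleftrightarrow> (even k \<longrightarrow> A' k ** u1 = u2 ** A k) \<and> (odd k \<longrightarrow> A' k ** u2 = u1 ** A k)"

lemma rels_cc: "rels k A A' u1 u2 \<longleftrightarrow> cc u1 u2 k ** A k = A' k ** cc u1 u2 (Suc k)"
  by (auto simp: rels_def cc_def)

lemma fwd:
  fixes u1 u2 :: "'a::field^'n::finite^'n"
  assumes dA: "diagram_phis m A phi" and dA': "diagram_phis m A' phi'" and m: "m \<ge> 1"
    and R: "\<forall>k. 1 \<le> k \<longrightarrow> k \<le> m \<longrightarrow> rels k A A' u1 u2"
  shows "1 \<le> i \<Longrightarrow> i \<le> Suc m \<Longrightarrow> u2 ** fst (phi i) = fst (phi' i) ** cc u1 u2 i
          \<and> u1 ** snd (phi i) = snd (phi' i) ** cc u1 u2 i"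
proof (induction i rule: less_induct)
  case (less i)
  have b: "phi 1 = (0, mat 1) \<and> phi 2 = (mat 1, A 1)" by (rule phis_base[OF dA m])
  have b': "phi' 1 = (0, mat 1) \<and> phi' 2 = (mat 1, A' 1)" by (rule phis_base[OF dA' m])
  consider "i = 1" | "i = 2" | k where "i = k + 2" "k \<ge> 1"
  proof -
    have "i = 1 \<or> i = 2 \<or> (\<exists>k. i = k + 2 \<and> k \<ge> 1)" using less.prems by presburger
    then show "(i = 1 \<Longrightarrow> thesis) \<Longrightarrow> (i = 2 \<Longrightarrow> thesis) \<Longrightarrow> (\<And>k. i = k + 2 \<Longrightarrow> 1 \<le> k \<Longrightarrow> thesis) \<Longrightarrow> thesis" by blast
  qed
  then show ?case
  proof cases
    case 1
    then show ?thesis using b b' by (simp add: cc_def)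
  next
    case 2
    have "rels 1 A A' u1 u2" using R m by simp
    then show ?thesis using 2 b b' by (simp add: cc_def rels_def)
  next
    case 3
    have km: "k + 1 \<le> m" using 3 less.prems by simp
    have r: "fst (phi (k+2)) = fst (phi k) + fst (phi (k+1)) ** A (k+1)
       \<and> snd (phi (k+2)) = snd (phi k) + snd (phi (k+1)) ** A (k+1)"
      by (rule phis_rec[OF dA 3(2) km])
    have r': "fst (phi' (k+2)) = fst (phi' k) + fst (phi' (k+1)) ** A' (k+1)
       \<and> snd (phi' (k+2)) = snd (phi' k) + snd (phi' (k+1)) ** A' (k+1)"
      by (rule phis_rec[OF dA' 3(2) km])
    have IH1: "u2 ** fst (phi k) = fst (phi' k) ** cc u1 u2 k
          \<and> u1 ** snd (phi k) = snd (phi' k) ** cc u1 u2 k"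
      using less.IH[of k] 3 km by simp
    have IH2: "u2 ** fst (phi (k+1)) = fst (phi' (k+1)) ** cc u1 u2 (k+1)
          \<and> u1 ** snd (phi (k+1)) = snd (phi' (k+1)) ** cc u1 u2 (k+1)"
      using less.IH[of "k+1"] 3 km by simp
    have rk: "cc u1 u2 (k+1) ** A (k+1) = A' (k+1) ** cc u1 u2 (Suc (k+1))"
      using R km rels_cc by (metis le_add2)
    have ck: "cc u1 u2 (k+2) = cc u1 u2 k" "cc u1 u2 (Suc (k+1)) = cc u1 u2 k"
      by (auto simp: cc_def)
    have rk2: "cc u1 u2 (k+1) ** A (k+1) = A' (k+1) ** cc u1 u2 k" using rk ck by simp
    have "u2 ** fst (phi (k+2)) = u2 ** fst (phi k) + (u2 ** fst (phi (k+1))) ** A (k+1)"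
      using r by (simp add: matrix_add_ldistrib matrix_mul_assoc)
    also have "\<dots> = fst (phi' k) ** cc u1 u2 k + fst (phi' (k+1)) ** (cc u1 u2 (k+1) ** A (k+1))"
      using IH1 IH2 by (simp add: matrix_mul_assoc)
    also have "\<dots> = (fst (phi' k) + fst (phi' (k+1)) ** A' (k+1)) ** cc u1 u2 k"
      using rk2 by (simp add: mradd matrix_mul_assoc)
    finally have X: "u2 ** fst (phi (k+2)) = fst (phi' (k+2)) ** cc u1 u2 (k+2)" using r' ck by simp
    have "u1 ** snd (phi (k+2)) = u1 ** snd (phi k) + (u1 ** snd (phi (k+1))) ** A (k+1)"
      using r by (simp add: matrix_add_ldistrib matrix_mul_assoc)
    also have "\<dots> = snd (phi' k) ** cc u1 u2 k + snd (phi' (k+1)) ** (cc u1 u2 (k+1) ** A (k+1))"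
      using IH1 IH2 by (simp add: matrix_mul_assoc)
    also have "\<dots> = (snd (phi' k) + snd (phi' (k+1)) ** A' (k+1)) ** cc u1 u2 k"
      using rk2 by (simp add: mradd matrix_mul_assoc)
    finally have Y: "u1 ** snd (phi (k+2)) = snd (phi' (k+2)) ** cc u1 u2 (k+2)" using r' ck by simp
    show ?thesis using X Y 3(1) by simp
  qed
qed


lemma bwd_base:
  fixes u0 a b c d :: "'a::field^'n::finite^'n"
  assumes dA: "diagram_phis m A phi" and dA': "diagram_phis m A' phi'" and m: "m \<ge> 1"
    and M: "(u0, (a,b,c,d), u) \<in> sheaf_morphisms m phi phi'"
  shows "b = 0 \<and> c = 0 \<and> d = u0 \<and> u 1 = u0 \<and> u 2 = a \<and> u0 ** A 1 = A' 1 ** a"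
proof -
  have b: "phi 1 = (0, mat 1) \<and> phi 2 = (mat 1, A 1)" by (rule phis_base[OF dA m])
  have b': "phi' 1 = (0, mat 1) \<and> phi' 2 = (mat 1, A' 1)" by (rule phis_base[OF dA' m])
  from M have p: "endo_row u0 psi = row_blk psi (a,b,c,d)"
    and c1: "blk_col (a,b,c,d) (phi 1) = col_endo (phi' 1) (u 1)"
    and c2: "blk_col (a,b,c,d) (phi 2) = col_endo (phi' 2) (u 2)"
    using m by (auto simp: sheaf_morphisms_def)
  from p have cd: "c = 0" "d = u0" by (auto simp: endo_row_def row_blk_def psi_def)
  from c1 b b' cd have "b = 0" "u 1 = u0" by (auto simp: blk_col_def col_endo_def)
  moreover from c2 b b' cd \<open>b = 0\<close> have "u 2 = a" "u0 ** A 1 = A' 1 ** a" by (auto simp: blk_col_def col_endo_def)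
  ultimately show ?thesis using cd by simp
qed

lemma bwd:
  fixes u0 a :: "'a::field^'n::finite^'n"
  assumes dA: "diagram_phis m A phi" and dA': "diagram_phis m A' phi'" and m: "m \<ge> 1"
    and M: "(u0, (a,0,0,u0), u) \<in> sheaf_morphisms m phi phi'"
    and u1: "u 1 = u0" and u2: "u 2 = a" and r1: "u0 ** A 1 = A' 1 ** a"
  shows "1 \<le> k \<Longrightarrow> k \<le> m \<Longrightarrow> u k = cc u0 a k \<and> u (Suc k) = cc u0 a (Suc k) \<and> rels k A A' u0 a"
proof (induction k rule: nat_induct_at_least)
  case base
  then show ?case using u1 u2 r1 by (simp add: cc_def rels_def numeral_2_eq_2)
next
  case (Suc k)
  have km: "k + 1 \<le> m" using Suc by simp
  have IH: "u k = cc u0 a k" "u (Suc k) = cc u0 a (Suc k)" using Suc by auto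
  have C: "\<And>i. i \<in> {1..Suc m} \<Longrightarrow> blk_col (a,0,0,u0) (phi i) = col_endo (phi' i) (u i)"
    using M by (auto simp: sheaf_morphisms_def)
  have Ci: "a ** fst (phi i) = fst (phi' i) ** u i \<and> u0 ** snd (phi i) = snd (phi' i) ** u i"
    if "1 \<le> i" "i \<le> Suc m" for i
    using C[of i] that by (cases "phi i"; cases "phi' i") (simp add: blk_col_def col_endo_def)
  have C0: "a ** fst (phi k) = fst (phi' k) ** cc u0 a k \<and> u0 ** snd (phi k) = snd (phi' k) ** cc u0 a k"
    using Ci[of k] IH Suc by simp
  have C1: "a ** fst (phi (k+1)) = fst (phi' (k+1)) ** cc u0 a (k+1) \<and> u0 ** snd (phi (k+1)) = snd (phi' (k+1)) ** cc u0 a (k+1)"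
    using Ci[of "k+1"] IH Suc by simp
  have C2: "a ** fst (phi (k+2)) = fst (phi' (k+2)) ** u (k+2) \<and> u0 ** snd (phi (k+2)) = snd (phi' (k+2)) ** u (k+2)"
    using Ci[of "k+2"] km Suc by simp
  have r: "fst (phi (k+2)) = fst (phi k) + fst (phi (k+1)) ** A (k+1)
       \<and> snd (phi (k+2)) = snd (phi k) + snd (phi (k+1)) ** A (k+1)"
    by (rule phis_rec[OF dA Suc(1) km])
  have r': "fst (phi' (k+2)) = fst (phi' k) + fst (phi' (k+1)) ** A' (k+1)
       \<and> snd (phi' (k+2)) = snd (phi' k) + snd (phi' (k+1)) ** A' (k+1)"
    by (rule phis_rec[OF dA' Suc(1) km])
  define P where "P = cc u0 a k - u (k+2)"
  define Q where "Q = cc u0 a (k+1) ** A (k+1) - A' (k+1) ** u (k+2)"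
  have e1: "fst (phi' k) ** cc u0 a k + fst (phi' (k+1)) ** (cc u0 a (k+1) ** A (k+1))
     = fst (phi' k) ** u (k+2) + fst (phi' (k+1)) ** (A' (k+1) ** u (k+2))"
  proof -
    have "a ** fst (phi (k+2)) = a ** fst (phi k) + (a ** fst (phi (k+1))) ** A (k+1)"
      using r by (simp add: matrix_add_ldistrib matrix_mul_assoc)
    also have "\<dots> = fst (phi' k) ** cc u0 a k + fst (phi' (k+1)) ** (cc u0 a (k+1) ** A (k+1))"
      using C0 C1 by (simp add: matrix_mul_assoc)
    finally have x: "a ** fst (phi (k+2)) = \<dots>" .
    have "fst (phi' (k+2)) ** u (k+2) = fst (phi' k) ** u (k+2) + fst (phi' (k+1)) ** (A' (k+1) ** u (k+2))"
      using r' by (simp add: mradd matrix_mul_assoc)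
    with x C2 show ?thesis by simp
  qed
  have e2: "snd (phi' k) ** cc u0 a k + snd (phi' (k+1)) ** (cc u0 a (k+1) ** A (k+1))
     = snd (phi' k) ** u (k+2) + snd (phi' (k+1)) ** (A' (k+1) ** u (k+2))"
  proof -
    have "u0 ** snd (phi (k+2)) = u0 ** snd (phi k) + (u0 ** snd (phi (k+1))) ** A (k+1)"
      using r by (simp add: matrix_add_ldistrib matrix_mul_assoc)
    also have "\<dots> = snd (phi' k) ** cc u0 a k + snd (phi' (k+1)) ** (cc u0 a (k+1) ** A (k+1))"
      using C0 C1 by (simp add: matrix_mul_assoc)
    finally have x: "u0 ** snd (phi (k+2)) = \<dots>" .
    have "snd (phi' (k+2)) ** u (k+2) = snd (phi' k) ** u (k+2) + snd (phi' (k+1)) ** (A' (k+1) ** u (k+2))"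
      using r' by (simp add: mradd matrix_mul_assoc)
    with x C2 show ?thesis by simp
  qed
  have f1: "fst (phi' k) ** P + fst (phi' (k+1)) ** Q = 0"
    using e1 unfolding P_def Q_def by (simp add: mldiff algebra_simps)
  have f2: "snd (phi' k) ** P + snd (phi' (k+1)) ** Q = 0"
    using e2 unfolding P_def Q_def by (simp add: mldiff algebra_simps)
  have "P = 0 \<and> Q = 0" using phis_inj[OF dA' Suc(1) _ f1 f2] km by simp
  hence "u (k+2) = cc u0 a k" "cc u0 a (k+1) ** A (k+1) = A' (k+1) ** u (k+2)"
    unfolding P_def Q_def by auto
  moreover have "cc u0 a (k+2) = cc u0 a k" by (simp add: cc_def)
  ultimately show ?case using IH rels_cc[of "k+1" A A' u0 a] by (simp add: cc_def)
qed


theorem mainTheorem8: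
  fixes m :: nat
    and A A' :: "nat \<Rightarrow> 'a::field^'n::finite^'n"
    and phi phi' :: "nat \<Rightarrow> ('a^'n^'n) \<times> ('a^'n^'n)"
  assumes "m \<ge> 1"
    and "invertible (contP A m)" and "invertible (contP A' m)"
    and "diagram_phis m A phi" and "diagram_phis m A' phi'"
  shows "bij_betw (pair_to_morphism m)
           {(u1, u2). (\<forall>k\<in>{1..m}. even k \<longrightarrow> A' k ** u1 = u2 ** A k)
                    \<and> (\<forall>k\<in>{1..m}. odd k \<longrightarrow> A' k ** u2 = u1 ** A k)}
           (sheaf_morphisms m phi phi')"
proof -
  note m = assms(1) and dA = assms(4) and dA' = assms(5)
  let ?S = "{(u1, u2). (\<forall>k\<in>{1..m}. even k \<longrightarrow> A' k ** u1 = u2 ** A k)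
                    \<and> (\<forall>k\<in>{1..m}. odd k \<longrightarrow> A' k ** u2 = u1 ** A k)}"
  have S_iff: "(u1, u2) \<in> ?S \<longleftrightarrow> (\<forall>k. 1 \<le> k \<longrightarrow> k \<le> m \<longrightarrow> rels k A A' u1 u2)" for u1 u2
    by (auto simp: rels_def)
  have pm: "pair_to_morphism m (u1, u2) = (u1, (u2, 0, 0, u1),
      \<lambda>k. if k \<in> {1..Suc m} then cc u1 u2 k else 0)" for u1 u2 :: "'a^'n^'n"
    unfolding pair_to_morphism_def cc_def by simp
  have inj: "inj_on (pair_to_morphism m) ?S"
    by (rule inj_onI) (auto simp: pair_to_morphism_def)
  have sub1: "pair_to_morphism m ` ?S \<subseteq> sheaf_morphisms m phi phi'"
  proof
    fix z assume "z \<in> pair_to_morphism m ` ?S"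
    then obtain u1 u2 where z: "z = pair_to_morphism m (u1, u2)" and inS: "(u1, u2) \<in> ?S" by auto
    have R: "\<forall>k. 1 \<le> k \<longrightarrow> k \<le> m \<longrightarrow> rels k A A' u1 u2" using inS by (simp only: S_iff)
    have F: "u2 ** fst (phi i) = fst (phi' i) ** cc u1 u2 i
          \<and> u1 ** snd (phi i) = snd (phi' i) ** cc u1 u2 i" if "1 \<le> i" "i \<le> Suc m" for i
      by (rule fwd[OF dA dA' m R that])
    have F': "blk_col (u2, 0, 0, u1) (phi i) = col_endo (phi' i) (cc u1 u2 i)" if "1 \<le> i" "i \<le> Suc m" for i
      using F[OF that] by (cases "phi i"; cases "phi' i") (simp add: blk_col_def col_endo_def)
    show "z \<in> sheaf_morphisms m phi phi'"
      unfolding z pm sheaf_morphisms_def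
      using F' by (auto simp: endo_row_def row_blk_def psi_def)
  qed
  have sub2: "sheaf_morphisms m phi phi' \<subseteq> pair_to_morphism m ` ?S"
  proof
    fix z assume zT: "z \<in> sheaf_morphisms m phi phi'"
    obtain u0 v u where z0: "z = (u0, v, u)" by (cases z) auto
    obtain a b c d where "v = (a,b,c,d)" by (cases v) auto
    with z0 have z: "z = (u0, (a,b,c,d), u)" by simp
    have base: "b = 0 \<and> c = 0 \<and> d = u0 \<and> u 1 = u0 \<and> u 2 = a \<and> u0 ** A 1 = A' 1 ** a"
      by (rule bwd_base[OF dA dA' m zT[unfolded z]])
    have zT': "(u0, (a,0,0,u0), u) \<in> sheaf_morphisms m phi phi'" using zT z base by simp
    have B: "u k = cc u0 a k \<and> u (Suc k) = cc u0 a (Suc k) \<and> rels k A A' u0 a"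
      if "1 \<le> k" "k \<le> m" for k
      using bwd[OF dA dA' m zT'] base that by blast
    have out: "\<forall>i. i \<notin> {1..Suc m} \<longrightarrow> u i = 0" using zT by (simp add: z sheaf_morphisms_def)
    have ueq: "u = (\<lambda>k. if k \<in> {1..Suc m} then cc u0 a k else 0)"
    proof
      fix i show "u i = (if i \<in> {1..Suc m} then cc u0 a i else 0)"
      proof (cases "i \<in> {1..Suc m}")
        case True
        then show ?thesis
        proof (cases "i \<le> m")
          case True then show ?thesis using B[of i] \<open>i \<in> {1..Suc m}\<close> by simp
        next
          case False then have "i = Suc m" using \<open>i \<in> {1..Suc m}\<close> by simp
          then show ?thesis using B[of m] m by simp
        qed
      next
        case False then show ?thesis using out by auto
      qed
    qed
    have "(u0, a) \<in> ?S" unfolding S_iff using B by blast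
    moreover have "z = pair_to_morphism m (u0, a)" using z base ueq pm by simp
    ultimately show "z \<in> pair_to_morphism m ` ?S" by blast
  qed
  show ?thesis unfolding bij_betw_def using inj sub1 sub2 by blast
qed

end
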